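(* Let $X$ and $U$ be Hilbert spaces, let $A$ generate an analytic semigroup $\{S(t);t\geq0\}$ on $X$, with $D(A)$ endowed with the graph norm, and let $B\in\mathcal L(D(A),U)$. For $u_0\in D(A)$ define $g(t)=\|BS(t)u_0\|_U^2$, $t>0$, and $u(t)=S(t)u_0$. Then for each $u_0\in D(A)$ the function $g$ is analytic on $(0,+\infty)$. Furthermore, there are constants $K\geq1$ and $\rho\in(0,1)$ independent of $u_0$ such that, whenever $0\leq s<t$ with $0<t-s\leq1$, $$|g^{(\beta)}(t)|\leq K\frac{(t-s)^{-2}\beta!}{(\rho(t-s))^\beta}\|u(s)\|_X^2\quad\text{for all }\beta\in\mathbb N.$$
   Context: $g^{(\beta)}$ denotes the $\beta$-th derivative of $g$. *)

theory Defs
  imports "HOL-Analysis.Analysis"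
begin

definition C0_semigroup :: "(real \<Rightarrow> ('x::real_normed_vector \<Rightarrow>\<^sub>L 'x)) \<Rightarrow> bool" where
  "C0_semigroup S \<longleftrightarrow>
     S 0 = id_blinfun \<and>
     (\<forall>t s. 0 \<le> t \<longrightarrow> 0 \<le> s \<longrightarrow> S (t + s) = S t o\<^sub>L S s) \<and>
     (\<forall>x. ((\<lambda>t. blinfun_apply (S t) x) \<longlongrightarrow> x) (at_right 0))"

definition semigroup_generator ::
  "(real \<Rightarrow> ('x::real_normed_vector \<Rightarrow>\<^sub>L 'x)) \<Rightarrow> 'x set \<Rightarrow> ('x \<Rightarrow> 'x) \<Rightarrow> bool" where
  "semigroup_generator S D A \<longleftrightarrow>
     D = {x. \<exists>y. ((\<lambda>h. (1 / h) *\<^sub>R (blinfun_apply (S h) x - x)) \<longlongrightarrow> y) (at_right 0)} \<and>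
     (\<forall>x\<in>D. ((\<lambda>h. (1 / h) *\<^sub>R (blinfun_apply (S h) x - x)) \<longlongrightarrow> A x) (at_right 0))"

text \<open>A generates an analytic semigroup S (real-space form of the standard definition:
  S is a C0-semigroup with generator A, S(t) maps X into D(A) for t > 0 and
  sup_{0<t\<le>1} t \<parallel>A S(t)\<parallel> < \<infinity>).\<close>
definition generates_analytic_semigroup ::
  "'x set \<Rightarrow> ('x \<Rightarrow> 'x) \<Rightarrow> (real \<Rightarrow> ('x::real_normed_vector \<Rightarrow>\<^sub>L 'x)) \<Rightarrow> bool" where
  "generates_analytic_semigroup D A S \<longleftrightarrow>
     C0_semigroup S \<and> semigroup_generator S D A \<and>
     (\<forall>t>0. \<forall>x. blinfun_apply (S t) x \<in> D) \<and>
     (\<exists>C. \<forall>t. 0 < t \<longrightarrow> t \<le> 1 \<longrightarrow> (\<forall>x. norm (A (blinfun_apply (S t) x)) \<le> C / t * norm x))"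

definition bounded_on_graph_norm ::
  "'x set \<Rightarrow> ('x::real_normed_vector \<Rightarrow> 'x) \<Rightarrow> ('x \<Rightarrow> 'u::real_normed_vector) \<Rightarrow> bool" where
  "bounded_on_graph_norm D A B \<longleftrightarrow>
     (\<forall>x\<in>D. \<forall>y\<in>D. B (x + y) = B x + B y) \<and>
     (\<forall>c. \<forall>x\<in>D. B (c *\<^sub>R x) = c *\<^sub>R B x) \<and>
     (\<exists>M. \<forall>x\<in>D. norm (B x) \<le> M * (norm x + norm (A x)))"

definition real_analytic_on :: "(real \<Rightarrow> real) \<Rightarrow> real set \<Rightarrow> bool" where
  "real_analytic_on g T \<longleftrightarrow>
     (\<forall>x\<in>T. \<exists>r>0. \<exists>a::nat \<Rightarrow> real.
        \<forall>y. \<bar>y - x\<bar> < r \<longrightarrow> (\<lambda>n. a n * (y - x) ^ n) sums g y)"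

end

theory Submission
  imports Defs
begin
locale asg =
  fixes S :: "real \<Rightarrow> ('x::{real_normed_vector, complete_space} \<Rightarrow>\<^sub>L 'x)" and D :: "'x set" and A :: "'x \<Rightarrow> 'x" and C :: real
  assumes C0: "C0_semigroup S" and gen: "semigroup_generator S D A"
    and SD: "\<And>t x. 0 < t \<Longrightarrow> blinfun_apply (S t) x \<in> D"
    and Ab: "\<And>t x. 0 < t \<Longrightarrow> t \<le> 1 \<Longrightarrow> norm (A (blinfun_apply (S t) x)) \<le> C / t * norm x"
    and C1: "1 \<le> C"
begin

abbreviation T where "T t x \<equiv> blinfun_apply (S t) x"
definition Q where "Q x h = (1 / h) *\<^sub>R (T h x - x)"

lemma T0: "T 0 x = x"
  using C0 unfolding C0_semigroup_def by simp

lemma Tadd: "0 \<le> t \<Longrightarrow> 0 \<le> s \<Longrightarrow> T (t + s) x = T t (T s x)"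
  using C0 unfolding C0_semigroup_def by (simp add: blinfun_apply_blinfun_compose)

lemma Tcont: "((\<lambda>t. T t x) \<longlongrightarrow> x) (at_right 0)"
  using C0 unfolding C0_semigroup_def by simp

lemma Ddef: "D = {x. \<exists>y. (Q x \<longlongrightarrow> y) (at_right 0)}"
  using gen unfolding semigroup_generator_def Q_def[abs_def] by simp

lemma Alim: "x \<in> D \<Longrightarrow> (Q x \<longlongrightarrow> A x) (at_right 0)"
  using gen unfolding semigroup_generator_def Q_def[abs_def] by simp

lemma DI: "(Q x \<longlongrightarrow> y) (at_right 0) \<Longrightarrow> x \<in> D \<and> A x = y"
proof -
  assume a: "(Q x \<longlongrightarrow> y) (at_right 0)"
  then have "x \<in> D" using Ddef by blast
  with a Alim show ?thesis using tendsto_unique[OF trivial_limit_at_right_real] by blast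
qed

lemma Q_add: "Q (x + y) h = Q x h + Q y h"
  by (simp add: Q_def blinfun.add_right algebra_simps)
lemma Q_scale: "Q (c *\<^sub>R x) h = c *\<^sub>R Q x h"
  by (simp add: Q_def blinfun.scaleR_right algebra_simps)
lemma Q_diff: "Q (x - y) h = Q x h - Q y h"
  by (simp add: Q_def blinfun.diff_right algebra_simps)

lemma D_add: "x \<in> D \<Longrightarrow> y \<in> D \<Longrightarrow> x + y \<in> D \<and> A (x + y) = A x + A y"
  by (rule DI) (simp add: Q_add[abs_def] tendsto_add Alim)
lemma D_diff: "x \<in> D \<Longrightarrow> y \<in> D \<Longrightarrow> x - y \<in> D \<and> A (x - y) = A x - A y"
  by (rule DI) (simp add: Q_diff[abs_def] tendsto_diff Alim)
lemma D_scale: "x \<in> D \<Longrightarrow> c *\<^sub>R x \<in> D \<and> A (c *\<^sub>R x) = c *\<^sub>R A x"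
  by (rule DI) (simp add: Q_scale[abs_def] tendsto_scaleR Alim)

lemma Tcomm: "0 \<le> t \<Longrightarrow> 0 \<le> h \<Longrightarrow> T h (T t x) = T t (T h x)"
  using Tadd[of t h x] Tadd[of h t x] by (simp add: add.commute)

lemma Q_T: "0 \<le> t \<Longrightarrow> 0 \<le> h \<Longrightarrow> Q (T t x) h = T t (Q x h)"
  unfolding Q_def by (simp add: Tcomm blinfun.scaleR_right blinfun.diff_right)

lemma Tlin: "T t (x + y) = T t x + T t y" "T t (x - y) = T t x - T t y" "T t (c *\<^sub>R x) = c *\<^sub>R T t x"
  by (simp_all add: blinfun.add_right blinfun.diff_right blinfun.scaleR_right)

lemma A_T: assumes "x \<in> D" "0 \<le> t" shows "T t x \<in> D \<and> A (T t x) = T t (A x)"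
proof (rule DI)
  have "((\<lambda>h. T t (Q x h)) \<longlongrightarrow> T t (A x)) (at_right 0)"
    by (intro blinfun.tendsto tendsto_const Alim assms)
  moreover have "eventually (\<lambda>h. T t (Q x h) = Q (T t x) h) (at_right 0)"
    using eventually_at_right_less[of 0] by eventually_elim (simp add: Q_T assms)
  ultimately show "(Q (T t x) \<longlongrightarrow> T t (A x)) (at_right 0)"
    using Lim_transform_eventually by fastforce
qed

lemma AT_D: assumes "0 < s" shows "A (T s w) \<in> D"
proof -
  have "T s w = T (s/2) (T (s/2) w)" using Tadd[of "s/2" "s/2" w] assms by simp
  moreover have "T (s/2) w \<in> D" using SD assms by simp
  ultimately have "A (T s w) = T (s/2) (A (T (s/2) w))" using A_T[of "T (s/2) w" "s/2"] assms by simp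
  then show ?thesis using SD assms by simp
qed

end

context asg begin

lemma pointwise_cover: "\<exists>n::nat. \<forall>t. 0 \<le> t \<longrightarrow> t \<le> 1 / real (Suc n) \<longrightarrow> norm (T t x) \<le> real n"
proof -
  have "eventually (\<lambda>t. dist (T t x) x < 1) (at_right 0)"
    using Tcont[of x] by (simp add: tendsto_iff)
  then obtain b where b: "b > 0" "\<And>t. 0 < t \<Longrightarrow> t < b \<Longrightarrow> dist (T t x) x < 1"
    by (auto simp: eventually_at_right_field)
  define n where "n = nat (ceiling (max (norm x + 1) (1 / b)))"
  have n1: "norm x + 1 \<le> real n" unfolding n_def by linarith
  have n2: "1 / b \<le> real n" unfolding n_def by linarith
  have "1 / real (Suc n) < b"
  proof -
    have "1 / b < real (Suc n)" using n2 by simp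
    then show ?thesis using b(1) by (simp add: divide_simps mult.commute)
  qed
  show ?thesis
  proof (intro exI allI impI)
    fix t :: real assume t: "0 \<le> t" "t \<le> 1 / real (Suc n)"
    show "norm (T t x) \<le> real n"
    proof (cases "t = 0")
      case True then show ?thesis using n1 T0 by simp
    next
      case False
      then have "dist (T t x) x < 1" using b t \<open>1 / real (Suc n) < b\<close> by simp
      then have "norm (T t x) \<le> norm x + 1"
        using norm_triangle_sub[of "T t x" x] by (simp add: dist_norm)
      then show ?thesis using n1 by simp
    qed
  qed
qed

lemma unif_bound: "\<exists>\<eta>>0. \<exists>M0\<ge>0. \<forall>t y. 0 \<le> t \<longrightarrow> t \<le> \<eta> \<longrightarrow> norm (T t y) \<le> M0 * norm y"
proof -
  define E where "E n = {x. \<forall>t\<in>{0..1/real (Suc n)}. norm (T t x) \<le> real n}" for n :: nat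
  have clo: "closed (E n)" for n
  proof -
    have "E n = (\<Inter>t\<in>{0..1/real (Suc n)}. {x. norm (T t x) \<le> real n})"
      unfolding E_def by auto
    moreover have "closed {x. norm (T t x) \<le> real n}" for t
      by (intro closed_Collect_le continuous_intros)
    ultimately show ?thesis by auto
  qed
  have cov: "\<Union>(range E) = UNIV"
  proof -
    have "x \<in> \<Union>(range E)" for x
    proof -
      obtain n where "\<forall>t. 0 \<le> t \<longrightarrow> t \<le> 1/real(Suc n) \<longrightarrow> norm (T t x) \<le> real n"
        using pointwise_cover by blast
      then have "x \<in> E n" unfolding E_def by auto
      then show ?thesis by blast
    qed
    then show ?thesis by blast
  qed
  have "\<exists>n. interior (E n) \<noteq> {}"
  proof (rule ccontr)
    assume "\<not> ?thesis"
    have "euclidean interior_of \<Union>(range E) = {}"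
    proof (rule Baire_category_alt)
      show "completely_metrizable_space (euclidean::'x topology) \<or> locally_compact_space (euclidean::'x topology) \<and> regular_space (euclidean::'x topology)"
        using completely_metrizable_space_euclidean by blast
      show "countable (range E)" by simp
      fix U assume "U \<in> range E"
      then obtain m where m: "U = E m" by blast
      show "closedin euclidean U \<and> euclidean interior_of U = {}"
        unfolding m using clo[of m] \<open>\<not> (\<exists>n. interior (E n) \<noteq> {})\<close>
        by (simp add: closed_closedin[symmetric])
    qed
    then show False using cov by simp
  qed
  then obtain n x0 where "x0 \<in> interior (E n)" by blast
  then obtain r where r: "r > 0" "ball x0 r \<subseteq> E n"
  proof -
    have "open (interior (E n))" by simp
    then obtain r where "r > 0" "ball x0 r \<subseteq> interior (E n)"
      using \<open>x0 \<in> interior (E n)\<close> unfolding open_contains_ball by blast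
    then show ?thesis using interior_subset that by blast
  qed
  define \<eta> where "\<eta> = 1 / real (Suc n)"
  have bnd: "norm (T t y) \<le> (4 * real n / r) * norm y" if t: "0 \<le> t" "t \<le> \<eta>" for t y
  proof (cases "y = 0")
    case True then show ?thesis by (simp add: blinfun.zero_right)
  next
    case False
    define c where "c = r / (2 * norm y)"
    have c: "c > 0" using r False by (simp add: c_def)
    have "x0 + c *\<^sub>R y \<in> ball x0 r"
      using r False by (simp add: c_def dist_norm)
    then have h1: "norm (T t (x0 + c *\<^sub>R y)) \<le> real n" using r t unfolding E_def \<eta>_def by auto
    have "x0 \<in> E n" using r centre_in_ball by blast
    then have h2: "norm (T t x0) \<le> real n" using t unfolding E_def \<eta>_def by auto
    have "c *\<^sub>R T t y = T t (x0 + c *\<^sub>R y) - T t x0" by (simp add: Tlin)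
    then have "norm (c *\<^sub>R T t y) \<le> norm (T t (x0 + c *\<^sub>R y)) + norm (T t x0)"
      using norm_triangle_ineq4 by metis
    then have "c * norm (T t y) \<le> 2 * real n"
      using h1 h2 c by simp
    then have "norm (T t y) \<le> 2 * real n / c" using c by (simp add: field_simps)
    also have "\<dots> = (4 * real n / r) * norm y" using False r by (simp add: c_def field_simps)
    finally show ?thesis .
  qed
  show ?thesis
    apply (rule exI[of _ \<eta>])
    apply (intro conjI)
     apply (simp add: \<eta>_def)
    apply (rule exI[of _ "4 * real n / r"])
    using bnd r by auto
qed

end

lemma vd_split:
  fixes f :: "real \<Rightarrow> 'a::real_normed_vector"
  assumes R: "((\<lambda>h. (1/h) *\<^sub>R (f (x+h) - f x)) \<longlongrightarrow> v) (at_right 0)"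
    and L: "((\<lambda>h. (1/h) *\<^sub>R (f x - f (x-h))) \<longlongrightarrow> v) (at_right 0)"
  shows "(f has_vector_derivative v) (at x)"
proof -
  have Lm: "((\<lambda>h. (1/h) *\<^sub>R (f (x+h) - f x)) \<longlongrightarrow> v) (at_left 0)"
    unfolding filterlim_at_left_to_right
  proof -
    have "(\<lambda>h. (1/h) *\<^sub>R (f x - f (x-h))) = (\<lambda>h::real. (1 / - h) *\<^sub>R (f (x + - h) - f x))"
      by (rule ext) (simp add: algebra_simps)
    then show "((\<lambda>h::real. (1 / - h) *\<^sub>R (f (x + - h) - f x)) \<longlongrightarrow> v) (at_right (- 0))"
      using L by simp
  qed
  have at: "((\<lambda>h. (1/h) *\<^sub>R (f (x+h) - f x)) \<longlongrightarrow> v) (at 0)"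
    using filterlim_split_at[OF Lm R] .
  then have "((\<lambda>h. norm ((1/h) *\<^sub>R (f (x+h) - f x) - v)) \<longlongrightarrow> 0) (at 0)"
    using LIM_zero tendsto_norm_zero by blast
  moreover have "eventually (\<lambda>h. norm ((1/h) *\<^sub>R (f (x+h) - f x) - v) = norm (f (x + h) - f x - h *\<^sub>R v) / norm h) (at (0::real))"
  proof -
    have "norm ((1/h) *\<^sub>R (f (x+h) - f x) - v) = norm (f (x + h) - f x - h *\<^sub>R v) / norm h" if "h \<noteq> 0" for h :: real
    proof -
      have "(1/h) *\<^sub>R (f (x+h) - f x) - v = (1/h) *\<^sub>R (f (x + h) - f x - h *\<^sub>R v)"
        using that by (simp add: algebra_simps)
      then show ?thesis by (simp add: divide_inverse mult.commute)
    qed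
    then show ?thesis by (auto simp: eventually_at_filter)
  qed
  ultimately have "((\<lambda>h. norm (f (x + h) - f x - h *\<^sub>R v) / norm h) \<longlongrightarrow> 0) (at 0)"
    using Lim_transform_eventually by fastforce
  then show ?thesis
    unfolding has_vector_derivative_def has_derivative_at
    by (simp add: bounded_linear_scaleR_left)
qed

context asg begin

lemma loc_bound: assumes "0 \<le> \<tau>"
  shows "\<exists>\<epsilon>>0. \<exists>K. \<forall>s y. \<tau> - \<epsilon> \<le> s \<longrightarrow> s \<le> \<tau> \<longrightarrow> 0 \<le> s \<longrightarrow> norm (T s y) \<le> K * norm y"
proof -
  obtain \<eta> M0 where e: "\<eta> > 0" "M0 \<ge> 0" "\<And>t y. 0 \<le> t \<Longrightarrow> t \<le> \<eta> \<Longrightarrow> norm (T t y) \<le> M0 * norm y"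
    using unif_bound by blast
  show ?thesis
  proof (cases "\<tau> \<le> \<eta>")
    case True
    have "\<forall>s y. \<tau> - 1 \<le> s \<longrightarrow> s \<le> \<tau> \<longrightarrow> 0 \<le> s \<longrightarrow> norm (T s y) \<le> M0 * norm y"
      using e True by auto
    then show ?thesis using zero_less_one by blast
  next
    case False
    have "\<forall>s y. \<tau> - \<eta> \<le> s \<longrightarrow> s \<le> \<tau> \<longrightarrow> 0 \<le> s \<longrightarrow> norm (T s y) \<le> M0 * norm (S (\<tau> - \<eta>)) * norm y"
    proof (intro allI impI)
      fix s y assume s: "\<tau> - \<eta> \<le> s" "s \<le> \<tau>" "0 \<le> s"
      have "norm (T s y) = norm (T (s - (\<tau> - \<eta>)) (T (\<tau> - \<eta>) y))"
        using Tadd[of "s - (\<tau> - \<eta>)" "\<tau> - \<eta>" y] s False by simp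
      also have "\<dots> \<le> M0 * norm (T (\<tau> - \<eta>) y)"
        using e(3) s by simp
      also have "\<dots> \<le> M0 * (norm (S (\<tau> - \<eta>)) * norm y)"
        using e(2) norm_blinfun by (intro mult_left_mono) auto
      finally show "norm (T s y) \<le> M0 * norm (S (\<tau> - \<eta>)) * norm y" by simp
    qed
    then show ?thesis using e(1) by blast
  qed
qed

lemma left_cont: assumes "0 < \<tau>" shows "((\<lambda>k. T (\<tau> - k) w) \<longlongrightarrow> T \<tau> w) (at_right 0)"
proof -
  obtain \<epsilon> K where e: "\<epsilon> > 0" "\<And>s y. \<tau> - \<epsilon> \<le> s \<Longrightarrow> s \<le> \<tau> \<Longrightarrow> 0 \<le> s \<Longrightarrow> norm (T s y) \<le> K * norm y"
    using loc_bound[of \<tau>] assms by auto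
  have "eventually (\<lambda>k. norm (T (\<tau> - k) w - T \<tau> w) \<le> K * norm (T k w - w)) (at_right 0)"
  proof (rule eventually_at_rightI[of 0 "min \<epsilon> \<tau>"])
    fix k assume k: "k \<in> {0<..<min \<epsilon> \<tau>}"
    have "T \<tau> w = T (\<tau> - k) (T k w)" using Tadd[of "\<tau> - k" k w] k by simp
    then have "T (\<tau> - k) w - T \<tau> w = - T (\<tau> - k) (T k w - w)" by (simp add: Tlin)
    then show "norm (T (\<tau> - k) w - T \<tau> w) \<le> K * norm (T k w - w)"
      using e(2)[of "\<tau> - k" "T k w - w"] k by simp
  qed (use e assms in simp)
  moreover have "((\<lambda>k. K * norm (T k w - w)) \<longlongrightarrow> 0) (at_right 0)"
  proof -
    have "((\<lambda>k. T k w - w) \<longlongrightarrow> 0) (at_right 0)" using Tcont LIM_zero by blast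
    then have "((\<lambda>k. norm (T k w - w)) \<longlongrightarrow> 0) (at_right 0)" using tendsto_norm_zero by blast
    then show ?thesis using tendsto_mult_right_zero by blast
  qed
  ultimately have "((\<lambda>k. T (\<tau> - k) w - T \<tau> w) \<longlongrightarrow> 0) (at_right 0)"
    by (rule Lim_null_comparison)
  then show ?thesis by (rule LIM_zero_cancel)
qed

lemma D1: assumes "0 < \<tau>" shows "((\<lambda>s. T s w) has_vector_derivative A (T \<tau> w)) (at \<tau>)"
proof (rule vd_split)
  have "eventually (\<lambda>h. Q (T \<tau> w) h = (1/h) *\<^sub>R (T (\<tau> + h) w - T \<tau> w)) (at_right 0)"
  proof (rule eventually_at_rightI[of 0 1])
    fix h :: real assume "h \<in> {0<..<1}"
    then show "Q (T \<tau> w) h = (1/h) *\<^sub>R (T (\<tau> + h) w - T \<tau> w)"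
      using Tadd[of h \<tau> w] assms by (simp add: Q_def add.commute)
  qed simp
  then show "((\<lambda>h. (1/h) *\<^sub>R (T (\<tau> + h) w - T \<tau> w)) \<longlongrightarrow> A (T \<tau> w)) (at_right 0)"
    using Alim[OF SD[OF assms]] Lim_transform_eventually by fastforce
next
  define c where "c = \<tau> / 2"
  have c: "0 < c" using assms by (simp add: c_def)
  define v where "v = T c w"
  have vD: "v \<in> D" using SD c by (simp add: v_def)
  obtain \<epsilon> K where e: "\<epsilon> > 0" "\<And>s y. c - \<epsilon> \<le> s \<Longrightarrow> s \<le> c \<Longrightarrow> 0 \<le> s \<Longrightarrow> norm (T s y) \<le> K * norm y"
    using loc_bound[of c] c by auto
  have eq: "eventually (\<lambda>h. (1/h) *\<^sub>R (T \<tau> w - T (\<tau> - h) w) = T (c - h) (Q v h)) (at_right 0)"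
  proof (rule eventually_at_rightI[of 0 c])
    fix h assume h: "h \<in> {0<..<c}"
    have 1: "T \<tau> w = T (c - h) (T h v)"
      using Tadd[of "c - h" h v] Tadd[of c c w] h c by (simp add: v_def c_def)
    have 2: "T (\<tau> - h) w = T (c - h) v"
      using Tadd[of "c - h" c w] h c by (simp add: v_def c_def)
    show "(1/h) *\<^sub>R (T \<tau> w - T (\<tau> - h) w) = T (c - h) (Q v h)"
      unfolding 1 2 Q_def by (simp add: Tlin)
  qed (use c in simp)
  have lim1: "((\<lambda>h. T (c - h) (A v)) \<longlongrightarrow> T c (A v)) (at_right 0)"
    using left_cont c by blast
  have "eventually (\<lambda>h. norm (T (c - h) (Q v h) - T (c - h) (A v)) \<le> K * norm (Q v h - A v)) (at_right 0)"
  proof (rule eventually_at_rightI[of 0 "min \<epsilon> c"])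
    fix h assume h: "h \<in> {0<..<min \<epsilon> c}"
    show "norm (T (c - h) (Q v h) - T (c - h) (A v)) \<le> K * norm (Q v h - A v)"
      using e(2)[of "c - h" "Q v h - A v"] h by (simp add: Tlin[symmetric])
  qed (use e c in simp)
  moreover have "((\<lambda>h. K * norm (Q v h - A v)) \<longlongrightarrow> 0) (at_right 0)"
  proof -
    have "((\<lambda>h. Q v h - A v) \<longlongrightarrow> 0) (at_right 0)" using Alim[OF vD] LIM_zero by blast
    then have "((\<lambda>h. norm (Q v h - A v)) \<longlongrightarrow> 0) (at_right 0)" using tendsto_norm_zero by blast
    then show ?thesis using tendsto_mult_right_zero by blast
  qed
  ultimately have "((\<lambda>h. T (c - h) (Q v h) - T (c - h) (A v)) \<longlongrightarrow> 0) (at_right 0)"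
    by (rule Lim_null_comparison)
  from tendsto_add[OF this lim1]
  have "((\<lambda>h. T (c - h) (Q v h)) \<longlongrightarrow> T c (A v)) (at_right 0)" by simp
  moreover have "T c (A v) = A (T \<tau> w)"
    using A_T[OF vD, of c] c Tadd[of c c w] by (simp add: v_def c_def)
  ultimately show "((\<lambda>h. (1/h) *\<^sub>R (T \<tau> w - T (\<tau> - h) w)) \<longlongrightarrow> A (T \<tau> w)) (at_right 0)"
    using eq Lim_transform_eventually eventually_mono by (smt (verit) tendsto_cong)
qed

end

context asg begin

definition G where "G \<sigma> y = A (T \<sigma> y)"

lemma Apow_rep: "0 < \<tau> \<Longrightarrow> (A^^(Suc k)) (T \<tau> x) = (G (\<tau> / Suc k)^^(Suc k)) x"
proof (induction k arbitrary: \<tau> x)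
  case 0 then show ?case by (simp add: G_def)
next
  case (Suc k)
  define \<sigma> where "\<sigma> = \<tau> / Suc (Suc k)"
  define \<tau>' where "\<tau>' = \<tau> - \<sigma>"
  have s: "0 < \<sigma>" using Suc.prems by (simp add: \<sigma>_def)
  have t': "\<tau>' = real (Suc k) * \<sigma>" unfolding \<tau>'_def \<sigma>_def by (simp add: field_simps)
  have t'p: "0 < \<tau>'" using s t' by simp
  have "A (T \<tau> x) = A (T \<tau>' (T \<sigma> x))" using Tadd[of \<tau>' \<sigma> x] s t'p by (simp add: \<tau>'_def)
  also have "\<dots> = T \<tau>' (G \<sigma> x)" using A_T[of "T \<sigma> x" \<tau>'] SD[OF s] t'p by (simp add: G_def)
  finally have 1: "A (T \<tau> x) = T \<tau>' (G \<sigma> x)" .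
  have "(A^^(Suc (Suc k))) (T \<tau> x) = (A^^(Suc k)) (A (T \<tau> x))"
    by (simp only: funpow_Suc_right o_apply)
  also have "\<dots> = (G (\<tau>' / Suc k)^^(Suc k)) (G \<sigma> x)" unfolding 1 using Suc.IH[OF t'p] .
  also have "\<tau>' / Suc k = \<sigma>" using t' by simp
  also have "(G \<sigma>^^(Suc k)) (G \<sigma> x) = (G \<sigma>^^(Suc (Suc k))) x"
    by (simp only: funpow_Suc_right o_apply)
  finally show ?case by (simp add: \<sigma>_def)
qed

lemma Apow_D: assumes t: "0 < \<tau>" shows "(A^^k) (T \<tau> x) \<in> D"
proof (cases k)
  case 0 then show ?thesis using SD t by simp
next
  case (Suc m)
  have "(A^^k) (T \<tau> x) = G (\<tau> / Suc m) ((G (\<tau> / Suc m)^^m) x)"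
    using Apow_rep[OF t, of m x] Suc by simp
  then show ?thesis using AT_D t by (simp add: G_def)
qed

lemma Apow_comm: "0 < \<sigma> \<Longrightarrow> 0 \<le> r \<Longrightarrow> (A^^k) (T (r + \<sigma>) x) = T r ((A^^k) (T \<sigma> x))"
proof (induction k)
  case 0 then show ?case using Tadd by simp
next
  case (Suc k)
  have "(A^^(Suc k)) (T (r + \<sigma>) x) = A (T r ((A^^k) (T \<sigma> x)))" using Suc by simp
  also have "\<dots> = T r (A ((A^^k) (T \<sigma> x)))" using A_T[OF Apow_D[OF Suc.prems(1)]] Suc.prems by simp
  finally show ?case by simp
qed

lemma G_bound: "0 < \<sigma> \<Longrightarrow> \<sigma> \<le> 1 \<Longrightarrow> norm ((G \<sigma>^^n) x) \<le> (C / \<sigma>)^n * norm x"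
proof (induction n)
  case 0 then show ?case by simp
next
  case (Suc n)
  have "norm ((G \<sigma>^^(Suc n)) x) \<le> C / \<sigma> * norm ((G \<sigma>^^n) x)"
    using Ab Suc.prems by (simp add: G_def)
  also have "\<dots> \<le> C / \<sigma> * ((C / \<sigma>)^n * norm x)"
    using Suc C1 by (intro mult_left_mono) auto
  finally show ?case by simp
qed

lemma Apow_bound: "0 < \<tau> \<Longrightarrow> \<tau> \<le> 1 \<Longrightarrow>
    norm ((A^^(Suc k)) (T \<tau> x)) \<le> (real (Suc k) * C / \<tau>)^(Suc k) * norm x"
proof -
  assume t: "0 < \<tau>" "\<tau> \<le> 1"
  have s: "0 < \<tau> / Suc k" "\<tau> / Suc k \<le> 1" using t by (auto simp: field_simps)
  have e: "real (Suc k) * C / \<tau> = C / (\<tau> / Suc k)" by simp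
  show ?thesis unfolding e Apow_rep[OF t(1)] by (rule G_bound[OF s])
qed

lemma F_deriv: assumes "0 < \<tau>"
  shows "((\<lambda>s. (A^^k) (T s x)) has_vector_derivative (A^^(Suc k)) (T \<tau> x)) (at \<tau>)"
proof -
  define \<sigma> where "\<sigma> = \<tau> / 2"
  have s: "0 < \<sigma>" "\<sigma> < \<tau>" using assms by (auto simp: \<sigma>_def)
  define z where "z = (A^^k) (T \<sigma> x)"
  have zD: "z \<in> D" using Apow_D[OF s(1)] by (simp add: z_def)
  have "((\<lambda>s. T s z) \<circ> (\<lambda>s. s - \<sigma>) has_vector_derivative (1 *\<^sub>R A (T (\<tau> - \<sigma>) z))) (at \<tau>)"
    by (rule vector_diff_chain_at) (auto intro!: derivative_eq_intros D1 simp: s)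
  moreover have "A (T (\<tau> - \<sigma>) z) = (A^^(Suc k)) (T \<tau> x)"
  proof -
    have "A (T (\<tau> - \<sigma>) z) = T (\<tau> - \<sigma>) (A z)" using A_T[OF zD] s by simp
    also have "\<dots> = T (\<tau> - \<sigma>) ((A^^(Suc k)) (T \<sigma> x))" by (simp add: z_def)
    also have "\<dots> = (A^^(Suc k)) (T (\<tau> - \<sigma> + \<sigma>) x)" using Apow_comm[OF s(1), of "\<tau> - \<sigma>" "Suc k" x] s by simp
    finally show ?thesis by simp
  qed
  ultimately have d: "((\<lambda>s. T (s - \<sigma>) z) has_vector_derivative (A^^(Suc k)) (T \<tau> x)) (at \<tau>)"
    by (simp add: o_def)
  show ?thesis
  proof (rule has_vector_derivative_transform_within_open[OF d, of "{\<sigma><..}"])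
    fix s assume "s \<in> {\<sigma><..}"
    then show "T (s - \<sigma>) z = (A^^k) (T s x)"
      using Apow_comm[OF s(1), of "s - \<sigma>" k x] by (simp add: z_def)
  qed (use s in auto)
qed

end

lemma pow_le_exp_fact: "real n ^ n \<le> exp 1 ^ n * fact n"
proof -
  have s: "(\<lambda>i. real n ^ i /\<^sub>R fact i) sums exp (real n)" by (rule exp_converges)
  have "(\<Sum>i\<in>{n}. real n ^ i /\<^sub>R fact i) \<le> (\<Sum>i. real n ^ i /\<^sub>R fact i)"
    by (rule sum_le_suminf[OF sums_summable[OF s]]) auto
  then have "real n ^ n / fact n \<le> exp (real n)" using sums_unique[OF s] by (simp add: divide_inverse mult.commute)
  moreover have "exp (real n) = exp 1 ^ n" using exp_of_nat_mult[of n 1] by simp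
  ultimately show ?thesis by (simp add: divide_le_eq mult.commute)
qed

context asg begin

lemma T_bound: assumes d: "0 < \<delta>" "\<delta> \<le> 1"
  shows "norm (T \<delta> y) \<le> (norm (S 1) + C) / \<delta> * norm y"
proof -
  have "norm ((\<lambda>s. T s y) 1 - (\<lambda>s. T s y) \<delta>) \<le> (C / \<delta> * norm y) * norm (1 - \<delta>)"
  proof (rule differentiable_bound[of "{\<delta>..1}" _ "\<lambda>x h. h *\<^sub>R A (T x y)"])
    show "convex {\<delta>..1}" by simp
    fix x assume x: "x \<in> {\<delta>..1}"
    then have "0 < x" using d by simp
    then show "((\<lambda>s. T s y) has_derivative (\<lambda>h. h *\<^sub>R A (T x y))) (at x within {\<delta>..1})"
      using D1[of x y] has_vector_derivative_at_within unfolding has_vector_derivative_def by blast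
    show "onorm (\<lambda>h. h *\<^sub>R A (T x y)) \<le> C / \<delta> * norm y"
    proof (rule onorm_bound)
      show "0 \<le> C / \<delta> * norm y" using C1 d by simp
      fix h :: real
      have "norm (A (T x y)) \<le> C / x * norm y" using Ab[of x y] x d by simp
      also have "\<dots> \<le> C / \<delta> * norm y"
        using x d C1 by (intro mult_right_mono divide_left_mono) auto
      finally have a: "norm (A (T x y)) \<le> C / \<delta> * norm y" .
      have "norm (h *\<^sub>R A (T x y)) = \<bar>h\<bar> * norm (A (T x y))" by simp
      also have "\<dots> \<le> \<bar>h\<bar> * (C / \<delta> * norm y)" using a by (rule mult_left_mono) simp
      finally show "norm (h *\<^sub>R A (T x y)) \<le> C / \<delta> * norm y * norm h"
        by (simp add: ac_simps)
    qed
  qed (use d in auto)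
  then have "norm (T 1 y - T \<delta> y) \<le> C / \<delta> * norm y"
    using d C1 by (smt (verit, ccfv_SIG) divide_nonneg_nonneg mult_left_le norm_ge_zero real_norm_def zero_le_mult_iff)
  moreover have "norm (T 1 y) \<le> norm (S 1) * norm y" by (rule norm_blinfun)
  moreover have "norm (S 1) * norm y \<le> norm (S 1) / \<delta> * norm y"
    using d by (intro mult_right_mono) (auto simp: divide_simps mult_left_le)
  ultimately have "norm (T \<delta> y) \<le> norm (S 1) / \<delta> * norm y + C / \<delta> * norm y"
    using norm_triangle_ineq3[of "T 1 y" "T \<delta> y"] norm_minus_commute by smt
  then show ?thesis by (simp add: add_divide_distrib distrib_right)
qed

definition L where "L = norm (S 1) + C"

lemma L1: "1 \<le> L" unfolding L_def using C1 norm_ge_zero[of "S 1"] by linarith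

lemma F_bound: assumes d: "0 < \<delta>" "\<delta> \<le> 1"
  shows "norm ((A^^k) (T \<delta> y)) + norm ((A^^(Suc k)) (T \<delta> y))
     \<le> 2 * (exp 1 * L / \<delta>)^(Suc k) * fact (Suc k) * norm y"
proof -
  define \<Lambda> where "\<Lambda> = exp 1 * L / \<delta>"
  have CL: "C \<le> L" unfolding L_def by simp
  have \<Lambda>1: "1 \<le> \<Lambda>"
  proof -
    have "1 \<le> exp (1::real)" by simp
    moreover have "1 \<le> L / \<delta>" using L1 d by (simp add: divide_simps)
    ultimately have "1 * 1 \<le> exp 1 * (L / \<delta>)" by (intro mult_mono) auto
    then show ?thesis by (simp add: \<Lambda>_def)
  qed
  have gen: "norm ((A^^(Suc m)) (T \<delta> y)) \<le> \<Lambda>^(Suc m) * fact (Suc m) * norm y" for m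
  proof -
    have "norm ((A^^(Suc m)) (T \<delta> y)) \<le> (real (Suc m) * C / \<delta>)^(Suc m) * norm y"
      by (rule Apow_bound[OF d])
    also have "(real (Suc m) * C / \<delta>)^(Suc m) = real (Suc m)^(Suc m) * (C / \<delta>)^(Suc m)"
      by (simp add: power_mult_distrib[symmetric])
    also have "\<dots> \<le> (exp 1 ^ Suc m * fact (Suc m)) * (L / \<delta>)^(Suc m)"
      using pow_le_exp_fact[of "Suc m"] CL C1 d
      by (intro mult_mono power_mono divide_right_mono) auto
    also have "\<dots> = \<Lambda>^(Suc m) * fact (Suc m)"
    proof -
      have "\<Lambda> = exp 1 * (L / \<delta>)" by (simp add: \<Lambda>_def)
      then have "\<Lambda>^(Suc m) = exp 1 ^ Suc m * (L / \<delta>)^(Suc m)" by (simp only: power_mult_distrib)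
      then show ?thesis by simp
    qed
    finally show ?thesis by (simp add: mult_right_mono)
  qed
  show ?thesis
  proof (cases k)
    case 0
    have "norm ((A^^0) (T \<delta> y)) \<le> \<Lambda> * norm y"
    proof -
      have "norm (T \<delta> y) \<le> L / \<delta> * norm y" using T_bound[OF d] by (simp add: L_def)
      also have "\<dots> \<le> \<Lambda> * norm y" unfolding \<Lambda>_def
        using L1 d by (intro mult_right_mono) (auto simp: divide_simps)
      finally show ?thesis by simp
    qed
    moreover have "norm ((A^^(Suc 0)) (T \<delta> y)) \<le> \<Lambda> * norm y" using gen[of 0] by simp
    ultimately show ?thesis using 0 by (simp add: \<Lambda>_def)
  next
    case (Suc m)
    have "norm ((A^^k) (T \<delta> y)) \<le> \<Lambda>^k * fact k * norm y" using gen[of m] Suc by simp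
    also have "\<dots> \<le> \<Lambda>^(Suc k) * fact (Suc k) * norm y"
    proof (intro mult_right_mono mult_mono)
      show "\<Lambda>^k \<le> \<Lambda>^(Suc k)" using \<Lambda>1 by (simp add: power_increasing)
      show "(fact k :: real) \<le> fact (Suc k)" by (rule fact_mono) simp
    qed (use \<Lambda>1 in auto)
    finally have 1: "norm ((A^^k) (T \<delta> y)) \<le> \<Lambda>^(Suc k) * fact (Suc k) * norm y" .
    have 2: "norm ((A^^(Suc k)) (T \<delta> y)) \<le> \<Lambda>^(Suc k) * fact (Suc k) * norm y" using gen[of k] .
    have "norm ((A^^k) (T \<delta> y)) + norm ((A^^(Suc k)) (T \<delta> y)) \<le> 2 * (\<Lambda>^(Suc k) * fact (Suc k) * norm y)"
      using 1 2 by linarith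
    then show ?thesis unfolding \<Lambda>_def by (simp only: mult.assoc)
  qed
qed

end

lemma leib:
  fixes p :: "nat \<Rightarrow> nat \<Rightarrow> real"
  shows "(\<Sum>j\<le>n. real (n choose j) * (p j (Suc n - j) + p (Suc j) (n - j)))
       = (\<Sum>j\<le>Suc n. real (Suc n choose j) * p j (Suc n - j))"
proof -
  have a: "(\<Sum>j\<le>n. real (n choose j) * p j (Suc n - j))
     = p 0 (Suc n) + (\<Sum>j\<le>n. real (n choose Suc j) * p (Suc j) (n - j))"
  proof -
    have "(\<Sum>j\<le>n. real (n choose j) * p j (Suc n - j)) = (\<Sum>j\<le>Suc n. real (n choose j) * p j (Suc n - j))"
      by simp
    also have "\<dots> = p 0 (Suc n) + (\<Sum>j\<le>n. real (n choose Suc j) * p (Suc j) (n - j))"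
      by (subst sum.atMost_Suc_shift) simp
    finally show ?thesis .
  qed
  have "(\<Sum>j\<le>Suc n. real (Suc n choose j) * p j (Suc n - j))
      = p 0 (Suc n) + (\<Sum>j\<le>n. real (Suc n choose Suc j) * p (Suc j) (n - j))"
    by (subst sum.atMost_Suc_shift) simp
  also have "\<dots> = p 0 (Suc n) + (\<Sum>j\<le>n. real (n choose j) * p (Suc j) (n - j))
        + (\<Sum>j\<le>n. real (n choose Suc j) * p (Suc j) (n - j))"
    by (simp add: sum.distrib distrib_right)
  finally show ?thesis using a by (simp add: sum.distrib distrib_left)
qed

locale asgB = asg S D A C for S :: "real \<Rightarrow> ('x::{real_normed_vector, complete_space} \<Rightarrow>\<^sub>L 'x)" and D A C +
  fixes B :: "'x \<Rightarrow> 'u::real_inner" and M :: real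
  assumes Badd: "\<And>x y. x \<in> D \<Longrightarrow> y \<in> D \<Longrightarrow> B (x + y) = B x + B y"
    and Bscale: "\<And>c x. x \<in> D \<Longrightarrow> B (c *\<^sub>R x) = c *\<^sub>R B x"
    and Bbound: "\<And>x. x \<in> D \<Longrightarrow> norm (B x) \<le> M * (norm x + norm (A x))"
    and M0: "0 \<le> M"
begin

lemma B_comb: assumes "a \<in> D" "b \<in> D" "c \<in> D"
  shows "B (a - b - r *\<^sub>R c) = B a - B b - r *\<^sub>R B c"
    "A (a - b - r *\<^sub>R c) = A a - A b - r *\<^sub>R A c"
    "a - b - r *\<^sub>R c \<in> D"
proof -
  have m: "\<And>x. x \<in> D \<Longrightarrow> - x = (-1) *\<^sub>R x" by simp
  have sD: "r *\<^sub>R c \<in> D" using D_scale assms by blast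
  have dD: "a - b \<in> D" using D_diff assms by blast
  show "a - b - r *\<^sub>R c \<in> D" using D_diff dD sD by blast
  show "A (a - b - r *\<^sub>R c) = A a - A b - r *\<^sub>R A c"
    using D_diff[OF dD sD] D_diff[OF assms(1,2)] D_scale[OF assms(3)] by simp
  have Bd: "B (x - y) = B x - B y" if "x \<in> D" "y \<in> D" for x y
  proof -
    have yD: "(-1) *\<^sub>R y \<in> D" using D_scale that by blast
    have e1: "B (x + (-1) *\<^sub>R y) = B x + B ((-1) *\<^sub>R y)" using Badd[OF that(1) yD] .
    have e2: "B ((-1) *\<^sub>R y) = - B y" using Bscale[OF that(2), of "-1"] by simp
    have "B (x - y) = B (x + (-1) *\<^sub>R y)" by simp
    also have "\<dots> = B x - B y" using e1 e2 by simp
    finally show ?thesis .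
  qed
  show "B (a - b - r *\<^sub>R c) = B a - B b - r *\<^sub>R B c"
    using Bd[OF dD sD] Bd[OF assms(1,2)] Bscale[OF assms(3)] by simp
qed

definition H where "H k \<tau> x = B ((A^^k) (T \<tau> x))"

lemma H_deriv: assumes t: "0 < \<tau>"
  shows "((\<lambda>s. H k s x) has_vector_derivative H (Suc k) \<tau> x) (at \<tau>)"
proof -
  define F where "F j s = (A^^j) (T s x)" for j s
  have FD: "0 < s \<Longrightarrow> F j s \<in> D" for j s using Apow_D by (simp add: F_def)
  have AF: "A (F j s) = F (Suc j) s" for j s by (simp add: F_def)
  have d: "\<And>j. ((\<lambda>y. norm (F j y - F j \<tau> - (y - \<tau>) *\<^sub>R F (Suc j) \<tau>) / norm (y - \<tau>)) \<longlongrightarrow> 0) (at \<tau>)"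
    using F_deriv[OF t] unfolding F_def has_vector_derivative_def has_derivative_iff_norm by blast
  have ev: "eventually (\<lambda>s. 0 < s) (at \<tau>)"
    using order_tendstoD(1)[OF tendsto_ident_at t] .
  have "((\<lambda>y. norm (H k y x - H k \<tau> x - (y - \<tau>) *\<^sub>R H (Suc k) \<tau> x) / norm (y - \<tau>)) \<longlongrightarrow> 0) (at \<tau>)"
  proof (rule Lim_null_comparison)
    show "eventually (\<lambda>y. norm (norm (H k y x - H k \<tau> x - (y - \<tau>) *\<^sub>R H (Suc k) \<tau> x) / norm (y - \<tau>))
        \<le> M * (norm (F k y - F k \<tau> - (y - \<tau>) *\<^sub>R F (Suc k) \<tau>) / norm (y - \<tau>)
             + norm (F (Suc k) y - F (Suc k) \<tau> - (y - \<tau>) *\<^sub>R F (Suc (Suc k)) \<tau>) / norm (y - \<tau>))) (at \<tau>)"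
      using ev
    proof eventually_elim
      case (elim y)
      have D3: "F k y \<in> D" "F k \<tau> \<in> D" "F (Suc k) \<tau> \<in> D" using FD elim t by auto
      have e: "H k y x - H k \<tau> x - (y - \<tau>) *\<^sub>R H (Suc k) \<tau> x = B (F k y - F k \<tau> - (y - \<tau>) *\<^sub>R F (Suc k) \<tau>)"
        using B_comb(1)[OF D3] elim t by (simp add: H_def F_def)
      have a: "A (F k y - F k \<tau> - (y - \<tau>) *\<^sub>R F (Suc k) \<tau>) = F (Suc k) y - F (Suc k) \<tau> - (y - \<tau>) *\<^sub>R F (Suc (Suc k)) \<tau>"
        using B_comb(2)[OF D3] elim t by (simp add: AF)
      have "norm (H k y x - H k \<tau> x - (y - \<tau>) *\<^sub>R H (Suc k) \<tau> x)
          \<le> M * (norm (F k y - F k \<tau> - (y - \<tau>) *\<^sub>R F (Suc k) \<tau>) + norm (F (Suc k) y - F (Suc k) \<tau> - (y - \<tau>) *\<^sub>R F (Suc (Suc k)) \<tau>))"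
      proof -
        have bb: "norm (B (F k y - F k \<tau> - (y - \<tau>) *\<^sub>R F (Suc k) \<tau>)) \<le> M * (norm (F k y - F k \<tau> - (y - \<tau>) *\<^sub>R F (Suc k) \<tau>) + norm (A (F k y - F k \<tau> - (y - \<tau>) *\<^sub>R F (Suc k) \<tau>)))"
          using Bbound[OF B_comb(3)[OF D3, of "y - \<tau>"]] .
        show ?thesis unfolding e using bb unfolding a .
      qed
      then show ?case by (simp add: divide_right_mono add_divide_distrib[symmetric] mult.assoc)
    qed
    show "((\<lambda>y. M * (norm (F k y - F k \<tau> - (y - \<tau>) *\<^sub>R F (Suc k) \<tau>) / norm (y - \<tau>)
             + norm (F (Suc k) y - F (Suc k) \<tau> - (y - \<tau>) *\<^sub>R F (Suc (Suc k)) \<tau>) / norm (y - \<tau>))) \<longlongrightarrow> 0) (at \<tau>)"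
      using tendsto_mult_right_zero[OF tendsto_add_zero[OF d[of k] d[of "Suc k"]]] .
  qed
  then show ?thesis
    unfolding has_vector_derivative_def has_derivative_iff_norm
    by (simp add: bounded_linear_scaleR_left)
qed

definition P where "P \<beta> \<tau> x = (\<Sum>j\<le>\<beta>. real (\<beta> choose j) * inner (H j \<tau> x) (H (\<beta> - j) \<tau> x))"

lemma P_deriv: assumes t: "0 < \<tau>"
  shows "((\<lambda>s. P \<beta> s x) has_real_derivative P (Suc \<beta>) \<tau> x) (at \<tau>)"
proof -
  have i: "((\<lambda>s. inner (H i s x) (H j s x)) has_real_derivative
       (inner (H i \<tau> x) (H (Suc j) \<tau> x) + inner (H (Suc i) \<tau> x) (H j \<tau> x))) (at \<tau>)" for i j
    unfolding has_real_derivative_iff_has_vector_derivative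
    using bounded_bilinear.has_vector_derivative[OF bounded_bilinear_inner H_deriv[OF t] H_deriv[OF t]]
    by simp
  have "((\<lambda>s. P \<beta> s x) has_real_derivative
      (\<Sum>j\<le>\<beta>. real (\<beta> choose j) * (inner (H j \<tau> x) (H (Suc (\<beta> - j)) \<tau> x) + inner (H (Suc j) \<tau> x) (H (\<beta> - j) \<tau> x)))) (at \<tau>)"
    unfolding P_def by (intro DERIV_sum DERIV_cmult i)
  moreover have "(\<Sum>j\<le>\<beta>. real (\<beta> choose j) * (inner (H j \<tau> x) (H (Suc (\<beta> - j)) \<tau> x) + inner (H (Suc j) \<tau> x) (H (\<beta> - j) \<tau> x)))
      = P (Suc \<beta>) \<tau> x"
  proof -
    have "(\<Sum>j\<le>\<beta>. real (\<beta> choose j) * (inner (H j \<tau> x) (H (Suc (\<beta> - j)) \<tau> x) + inner (H (Suc j) \<tau> x) (H (\<beta> - j) \<tau> x)))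
      = (\<Sum>j\<le>\<beta>. real (\<beta> choose j) * (inner (H j \<tau> x) (H (Suc \<beta> - j) \<tau> x) + inner (H (Suc j) \<tau> x) (H (\<beta> - j) \<tau> x)))"
      by (intro sum.cong refl) (simp add: Suc_diff_le)
    also have "\<dots> = P (Suc \<beta>) \<tau> x"
      unfolding P_def using leib[of \<beta> "\<lambda>i j. inner (H i \<tau> x) (H j \<tau> x)"] by simp
    finally show ?thesis .
  qed
  ultimately show ?thesis by simp
qed

lemma deriv_P: "0 < \<tau> \<Longrightarrow> (deriv^^\<beta>) (\<lambda>s. (norm (B (T s x)))\<^sup>2) \<tau> = P \<beta> \<tau> x"
proof (induction \<beta> arbitrary: \<tau>)
  case 0
  then show ?case by (simp add: P_def H_def power2_norm_eq_inner)
next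
  case (Suc \<beta>)
  have "eventually (\<lambda>s. (deriv^^\<beta>) (\<lambda>s. (norm (B (T s x)))\<^sup>2) s = P \<beta> s x) (nhds \<tau>)"
    using eventually_nhds_in_open[of "{0<..}" \<tau>] Suc by (auto elim!: eventually_mono)
  then have "deriv ((deriv^^\<beta>) (\<lambda>s. (norm (B (T s x)))\<^sup>2)) \<tau> = deriv (\<lambda>s. P \<beta> s x) \<tau>"
    by (rule deriv_cong_ev) simp
  also have "\<dots> = P (Suc \<beta>) \<tau> x" using P_deriv[OF Suc.prems] by (rule DERIV_imp_deriv)
  finally show ?case by simp
qed

end

lemma suc_le_pow2: "real (Suc k) \<le> 2 ^ k"
proof (induction k)
  case 0 then show ?case by simp
next
  case (Suc k) then show ?case by simp
qed

lemma fact_suc_le: "(fact (Suc k) :: real) \<le> 2 ^ k * fact k"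
proof -
  have "(fact (Suc k) :: real) = real (Suc k) * fact k" by simp
  also have "\<dots> \<le> 2 ^ k * fact k" using suc_le_pow2[of k] by (intro mult_right_mono) auto
  finally show ?thesis .
qed

context asgB begin

lemma H_bound: assumes st: "0 \<le> s" "s < t" "t - s \<le> 1"
  shows "norm (H k t x) \<le> M * (2 * (exp 1 * L / (t - s))^(Suc k) * fact (Suc k) * norm (T s x))"
proof -
  define \<delta> where "\<delta> = t - s"
  have d: "0 < \<delta>" "\<delta> \<le> 1" using st by (auto simp: \<delta>_def)
  define y where "y = T s x"
  have Tt: "T t x = T \<delta> y" using Tadd[of \<delta> s x] st by (simp add: \<delta>_def y_def)
  have FD: "(A^^k) (T \<delta> y) \<in> D" using Apow_D d by simp
  have "norm (H k t x) \<le> M * (norm ((A^^k) (T \<delta> y)) + norm ((A^^(Suc k)) (T \<delta> y)))"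
    unfolding H_def Tt using Bbound[OF FD] by simp
  also have "\<dots> \<le> M * (2 * (exp 1 * L / \<delta>)^(Suc k) * fact (Suc k) * norm y)"
    using F_bound[OF d, of k y] M0 by (intro mult_left_mono) auto
  finally show ?thesis by (simp only: \<delta>_def y_def)
qed

lemma P_bound: assumes st: "0 \<le> s" "s < t" "t - s \<le> 1"
  shows "\<bar>P \<beta> t x\<bar> \<le> (4 * M^2 * (exp 1 * L)^2) * ((t - s) powr (-2) * fact \<beta> / ((1 / (4 * exp 1 * L)) * (t - s))^\<beta>)
          * (norm (T s x))\<^sup>2"
proof -
  define \<delta> where "\<delta> = t - s"
  have d: "0 < \<delta>" "\<delta> \<le> 1" using st by (auto simp: \<delta>_def)
  define \<Lambda> where "\<Lambda> = exp 1 * L / \<delta>"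
  have \<Lambda>0: "0 \<le> \<Lambda>" using L1 d by (simp add: \<Lambda>_def)
  define Y where "Y = norm (T s x)"
  have Y0: "0 \<le> Y" by (simp add: Y_def)
  define a where "a k = M * (2 * \<Lambda>^(Suc k) * fact (Suc k) * Y)" for k
  have ha: "norm (H k t x) \<le> a k" for k
    using H_bound[OF st, of k x] by (simp only: a_def \<Lambda>_def \<delta>_def Y_def)
  have a0: "0 \<le> a k" for k unfolding a_def using M0 \<Lambda>0 Y0 by simp
  define W where "W = 4 * M^2 * \<Lambda>^(Suc (Suc \<beta>)) * 2^\<beta> * fact \<beta> * Y^2"
  have tb: "\<bar>real (\<beta> choose j) * inner (H j t x) (H (\<beta> - j) t x)\<bar> \<le> W" if j: "j \<le> \<beta>" for j
  proof -
    have "\<bar>real (\<beta> choose j) * inner (H j t x) (H (\<beta> - j) t x)\<bar>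
        = real (\<beta> choose j) * \<bar>inner (H j t x) (H (\<beta> - j) t x)\<bar>" by (simp add: abs_mult)
    also have "\<dots> \<le> real (\<beta> choose j) * (a j * a (\<beta> - j))"
    proof (intro mult_left_mono)
      have "\<bar>inner (H j t x) (H (\<beta> - j) t x)\<bar> \<le> norm (H j t x) * norm (H (\<beta> - j) t x)"
        by (rule Cauchy_Schwarz_ineq2)
      also have "\<dots> \<le> a j * a (\<beta> - j)" using ha a0 by (intro mult_mono) auto
      finally show "\<bar>inner (H j t x) (H (\<beta> - j) t x)\<bar> \<le> a j * a (\<beta> - j)" .
    qed simp
    also have "\<dots> = 4 * M^2 * \<Lambda>^(Suc (Suc \<beta>)) * Y^2 * (real (\<beta> choose j) * (fact (Suc j) * fact (Suc (\<beta> - j))))"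
    proof -
      have p: "\<Lambda>^(Suc j) * \<Lambda>^(Suc (\<beta> - j)) = \<Lambda>^(Suc (Suc \<beta>))"
        using j by (simp only: power_add[symmetric]) simp
      have "real (\<beta> choose j) * (a j * a (\<beta> - j)) = (2 * 2) * (M * M) * (\<Lambda>^(Suc j) * \<Lambda>^(Suc (\<beta> - j))) * (Y * Y) * (real (\<beta> choose j) * (fact (Suc j) * fact (Suc (\<beta> - j))))"
        unfolding a_def by (simp only: ac_simps)
      then show ?thesis unfolding p by (simp add: power2_eq_square)
    qed
    also have "\<dots> \<le> 4 * M^2 * \<Lambda>^(Suc (Suc \<beta>)) * Y^2 * (2^\<beta> * fact \<beta>)"
    proof (intro mult_left_mono)
      have "real (\<beta> choose j) * (fact (Suc j) * fact (Suc (\<beta> - j)))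
           \<le> real (\<beta> choose j) * ((2^j * fact j) * (2^(\<beta> - j) * fact (\<beta> - j)))"
        by (intro mult_left_mono mult_mono fact_suc_le) auto
      also have "\<dots> = 2^\<beta> * (fact j * fact (\<beta> - j) * real (\<beta> choose j))"
        using j by (simp add: power_add[symmetric] algebra_simps)
      also have "fact j * fact (\<beta> - j) * real (\<beta> choose j) = (fact \<beta> :: real)"
        using binomial_fact_lemma[OF j] by (metis of_nat_fact of_nat_mult)
      finally show "real (\<beta> choose j) * (fact (Suc j) * fact (Suc (\<beta> - j))) \<le> 2^\<beta> * fact \<beta>" .
    qed (use \<Lambda>0 Y0 in simp)
    also have "\<dots> = W" by (simp add: W_def algebra_simps)
    finally show ?thesis .
  qed
  have "\<bar>P \<beta> t x\<bar> \<le> (\<Sum>j\<le>\<beta>. \<bar>real (\<beta> choose j) * inner (H j t x) (H (\<beta> - j) t x)\<bar>)"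
    unfolding P_def by (rule sum_abs)
  also have "\<dots> \<le> (\<Sum>j\<le>\<beta>. W)" by (intro sum_mono tb) simp
  also have "\<dots> = real (Suc \<beta>) * W" by simp
  also have "\<dots> \<le> 2^\<beta> * W"
  proof (intro mult_right_mono suc_le_pow2)
    show "0 \<le> W" unfolding W_def using \<Lambda>0 Y0 by simp
  qed
  also have "2^\<beta> * W = (4 * M^2 * (exp 1 * L)^2) * ((1 / \<delta>^2) * fact \<beta> * (4 * exp 1 * L / \<delta>)^\<beta>) * Y^2"
  proof -
    have four: "(4::real)^\<beta> = 2^\<beta> * 2^\<beta>" by (simp add: power_mult_distrib[symmetric])
    show ?thesis unfolding W_def \<Lambda>_def by (simp add: power_mult_distrib power_divide field_simps power2_eq_square four[symmetric])
  qed
  also have "\<dots> = (4 * M^2 * (exp 1 * L)^2) * (\<delta> powr (-2) * fact \<beta> / ((1 / (4 * exp 1 * L)) * \<delta>)^\<beta>) * Y^2"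
  proof -
    have "\<delta> powr (-2) = 1 / \<delta>^2"
      using d powr_realpow[of \<delta> 2] by (simp add: powr_minus divide_inverse)
    moreover have "(4 * exp 1 * L / \<delta>)^\<beta> = 1 / ((1 / (4 * exp 1 * L)) * \<delta>)^\<beta>"
      using L1 d by (simp add: power_divide field_simps)
    ultimately show ?thesis by simp
  qed
  finally show ?thesis by (simp add: \<delta>_def Y_def)
qed

end

context asgB begin

definition K0 where "K0 = 4 * M^2 * (exp 1 * L)^2"
definition rho where "rho = 1 / (4 * exp 1 * L)"

lemma rho_pos: "0 < rho" and rho_lt1: "rho < 1"
proof -
  have "1 < 4 * exp 1 * L"
  proof -
    have "1 < exp (1::real)" by simp
    then have "1 * 1 < 4 * exp (1::real)" by linarith
    also have "\<dots> \<le> 4 * exp 1 * L" using L1 by simp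
    finally show ?thesis by simp
  qed
  then show "0 < rho" "rho < 1" unfolding rho_def by (auto simp: divide_simps)
qed

lemma K0_nonneg: "0 \<le> K0" unfolding K0_def by simp

lemma deriv_bound: assumes "0 \<le> s" "s < t" "t - s \<le> 1"
  shows "\<bar>(deriv^^\<beta>) (\<lambda>\<tau>. (norm (B (T \<tau> x)))\<^sup>2) t\<bar>
     \<le> K0 * ((t - s) powr (-2) * fact \<beta> / (rho * (t - s))^\<beta>) * (norm (T s x))\<^sup>2"
  using P_bound[OF assms, of \<beta> x] deriv_P[of t \<beta> x] assms unfolding K0_def rho_def by simp

lemma deriv_step: assumes "0 < t"
  shows "((deriv^^m) (\<lambda>\<tau>. (norm (B (T \<tau> x)))\<^sup>2) has_real_derivative
          (deriv^^(Suc m)) (\<lambda>\<tau>. (norm (B (T \<tau> x)))\<^sup>2) t) (at t)"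
proof -
  have ev: "eventually (\<lambda>s. (deriv^^m) (\<lambda>\<tau>. (norm (B (T \<tau> x)))\<^sup>2) s = P m s x) (nhds t)"
    using eventually_nhds_in_open[of "{0<..}" t] assms deriv_P by (auto elim!: eventually_mono)
  have "((\<lambda>s. P m s x) has_real_derivative P (Suc m) t x) (at t)" by (rule P_deriv[OF assms])
  then show ?thesis
    using DERIV_cong_ev[OF refl ev, of "(deriv^^(Suc m)) (\<lambda>\<tau>. (norm (B (T \<tau> x)))\<^sup>2) t" "P (Suc m) t x"]
      deriv_P[OF assms, of "Suc m" x] by simp
qed

lemma analytic: "real_analytic_on (\<lambda>\<tau>. (norm (B (T \<tau> u)))\<^sup>2) {0<..}"
  unfolding real_analytic_on_def
proof
  fix x :: real assume "x \<in> {0<..}"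
  then have x: "0 < x" by simp
  define g where "g = (\<lambda>\<tau>. (norm (B (T \<tau> u)))\<^sup>2)"
  define d where "d = min (x/2) (1/2)"
  have d: "0 < d" "d \<le> x/2" "d \<le> 1/2" using x by (auto simp: d_def)
  define s where "s = x - d"
  have s0: "0 \<le> s" using d by (simp add: s_def)
  define r where "r = rho * d / 2"
  have r: "0 < r" "r < d / 2" using rho_pos rho_lt1 d by (auto simp: r_def)
  define a where "a n = (deriv^^n) g x / fact n" for n
  define c where "c = K0 * (4 / d^2) * (norm (T s u))\<^sup>2"
  show "\<exists>r>0. \<exists>a. \<forall>y. \<bar>y - x\<bar> < r \<longrightarrow> (\<lambda>n. a n * (y - x) ^ n) sums g y"
  proof (intro exI[of _ r] conjI exI[of _ a] allI impI)
    show "0 < r" by fact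
    fix y assume y: "\<bar>y - x\<bar> < r"
    show "(\<lambda>n. a n * (y - x) ^ n) sums g y"
    proof (cases "y = x")
      case True
      then show ?thesis using powser_sums_zero[of a] by (simp add: a_def)
    next
      case False
      define q where "q = \<bar>y - x\<bar> / (rho * d / 2)"
      have q: "0 \<le> q" "q < 1" using y r rho_pos d by (auto simp: q_def r_def divide_simps)
      have rem: "\<bar>g y - (\<Sum>m<N. a m * (y - x)^m)\<bar> \<le> c * q^N" if N: "0 < N" for N
      proof -
        have "\<exists>t. (if y < x then y < t \<and> t < x else x < t \<and> t < y) \<and>
            g y = (\<Sum>m<N. ((deriv^^m) g x / fact m) * (y - x)^m) + ((deriv^^N) g t / fact N) * (y - x)^N"
        proof (rule Taylor[of N "\<lambda>m. (deriv^^m) g" g "min x y" "max x y" x y])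
          show "\<forall>m t. m < N \<and> min x y \<le> t \<and> t \<le> max x y \<longrightarrow>
              ((deriv^^m) g has_real_derivative (deriv^^(Suc m)) g t) (at t)"
          proof (intro allI impI)
            fix m t assume "m < N \<and> min x y \<le> t \<and> t \<le> max x y"
            then have "0 < t" using y r d by (auto simp: min_def split: if_splits)
            then show "((deriv^^m) g has_real_derivative (deriv^^(Suc m)) g t) (at t)"
              unfolding g_def by (rule deriv_step)
          qed
        qed (use N False in auto)
        then obtain t where tb: "(if y < x then y < t \<and> t < x else x < t \<and> t < y)"
          and geq': "g y = (\<Sum>m<N. ((deriv^^m) g x / fact m) * (y - x)^m) + ((deriv^^N) g t / fact N) * (y - x)^N"
          by blast
        have t: "\<bar>t - x\<bar> \<le> \<bar>y - x\<bar>" using tb by (auto split: if_splits)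
        have geq: "g y = (\<Sum>m<N. a m * (y - x)^m) + ((deriv^^N) g t / fact N) * (y - x)^N"
          using geq' by (simp add: a_def)
        have ts: "d / 2 \<le> t - s" "t - s \<le> 1" "s < t" using t y r d by (auto simp: s_def)
        have "\<bar>g y - (\<Sum>m<N. a m * (y - x)^m)\<bar> = \<bar>(deriv^^N) g t\<bar> / fact N * \<bar>y - x\<bar>^N"
          using geq by (simp add: abs_mult power_abs)
        also have "\<dots> \<le> (K0 * ((t - s) powr (-2) * fact N / (rho * (t - s))^N) * (norm (T s u))\<^sup>2) / fact N * \<bar>y - x\<bar>^N"
          using deriv_bound[OF s0 ts(3) ts(2), of N u] unfolding g_def
          by (intro mult_right_mono divide_right_mono) auto
        also have "\<dots> = K0 * (t - s) powr (-2) * (norm (T s u))\<^sup>2 * (\<bar>y - x\<bar> / (rho * (t - s)))^N"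
          by (simp add: power_divide field_simps)
        also have "\<dots> \<le> K0 * (4 / d^2) * (norm (T s u))\<^sup>2 * q^N"
        proof (intro mult_mono)
          have tp: "0 < t - s" using ts d by simp
          have "(t - s) powr (-2) = 1 / (t - s)^2"
            using tp powr_realpow[of "t - s" 2] by (simp add: powr_minus divide_inverse)
          also have "\<dots> \<le> 1 / (d/2)^2"
            using ts d by (intro divide_left_mono power_mono mult_pos_pos) auto
          also have "\<dots> = 4 / d^2" by (simp add: power_divide)
          finally show "(t - s) powr (-2) \<le> 4 / d^2" .
          show "(\<bar>y - x\<bar> / (rho * (t - s)))^N \<le> q^N"
            unfolding q_def using ts d rho_pos
            by (intro power_mono divide_left_mono mult_left_mono mult_pos_pos) auto
        qed (use K0_nonneg ts d rho_pos in auto)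
        finally show ?thesis by (simp add: c_def)
      qed
      have "(\<lambda>N. c * q^N) \<longlonglongrightarrow> 0"
        using q by (intro tendsto_mult_right_zero LIMSEQ_power_zero) simp
      then have lim0: "(\<lambda>N. g y - (\<Sum>m<N. a m * (y - x)^m)) \<longlonglongrightarrow> 0"
      proof (rule Lim_null_comparison[rotated])
        show "\<forall>\<^sub>F N in sequentially. norm (g y - (\<Sum>m<N. a m * (y - x)^m)) \<le> c * q^N"
          using eventually_gt_at_top[of 0] by eventually_elim (use rem in simp)
      qed
      have "(\<lambda>N. (\<Sum>m<N. a m * (y - x)^m)) \<longlonglongrightarrow> g y"
        using tendsto_diff[OF tendsto_const[of "g y"] lim0] by simp
      then show ?thesis unfolding sums_def .
    qed
  qed
qed

end

theorem lemma2p1: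
  fixes S :: "real \<Rightarrow> ('x::{real_inner, complete_space} \<Rightarrow>\<^sub>L 'x)"
    and D :: "'x set" and A :: "'x \<Rightarrow> 'x"
    and B :: "'x \<Rightarrow> 'u::{real_inner, complete_space}"
  assumes "generates_analytic_semigroup D A S"
    and "bounded_on_graph_norm D A B"
  shows "(\<forall>u0\<in>D. real_analytic_on (\<lambda>t. (norm (B (blinfun_apply (S t) u0)))\<^sup>2) {0<..})
       \<and> (\<exists>K \<rho>. K \<ge> 1 \<and> 0 < \<rho> \<and> \<rho> < 1 \<and>
            (\<forall>u0\<in>D. \<forall>s t. 0 \<le> s \<longrightarrow> s < t \<longrightarrow> t - s \<le> 1 \<longrightarrow>
               (\<forall>\<beta>::nat.
                  \<bar>(deriv ^^ \<beta>) (\<lambda>\<tau>. (norm (B (blinfun_apply (S \<tau>) u0)))\<^sup>2) t\<bar>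
                    \<le> K * ((t - s) powr (-2) * fact \<beta> / (\<rho> * (t - s)) ^ \<beta>)
                        * (norm (blinfun_apply (S s) u0))\<^sup>2)))"
proof -
  from assms(1) obtain C where C0: "C0_semigroup S" and gen: "semigroup_generator S D A"
    and SD: "\<And>t x. 0 < t \<Longrightarrow> blinfun_apply (S t) x \<in> D"
    and Ab: "\<And>t x. 0 < t \<Longrightarrow> t \<le> 1 \<Longrightarrow> norm (A (blinfun_apply (S t) x)) \<le> C / t * norm x"
    unfolding generates_analytic_semigroup_def by blast
  from assms(2) obtain M where Badd: "\<And>x y. x \<in> D \<Longrightarrow> y \<in> D \<Longrightarrow> B (x + y) = B x + B y"
    and Bscale: "\<And>c x. x \<in> D \<Longrightarrow> B (c *\<^sub>R x) = c *\<^sub>R B x"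
    and Bb: "\<And>x. x \<in> D \<Longrightarrow> norm (B x) \<le> M * (norm x + norm (A x))"
    unfolding bounded_on_graph_norm_def by blast
  define C' where "C' = max C 1"
  define M' where "M' = max M 0"
  interpret asgB S D A C' B M'
  proof
    show "C0_semigroup S" by fact
    show "semigroup_generator S D A" by fact
    show "\<And>t x. 0 < t \<Longrightarrow> blinfun_apply (S t) x \<in> D" by (rule SD)
    show "norm (A (blinfun_apply (S t) x)) \<le> C' / t * norm x" if "0 < t" "t \<le> 1" for t x
    proof -
      have "C / t * norm x \<le> C' / t * norm x"
        using that by (intro mult_right_mono divide_right_mono) (auto simp: C'_def)
      then show ?thesis using Ab[OF that, of x] by linarith
    qed
    show "1 \<le> C'" by (simp add: C'_def)
    show "\<And>x y. x \<in> D \<Longrightarrow> y \<in> D \<Longrightarrow> B (x + y) = B x + B y" by (rule Badd)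
    show "\<And>c x. x \<in> D \<Longrightarrow> B (c *\<^sub>R x) = c *\<^sub>R B x" by (rule Bscale)
    show "norm (B x) \<le> M' * (norm x + norm (A x))" if "x \<in> D" for x
    proof -
      have "M * (norm x + norm (A x)) \<le> M' * (norm x + norm (A x))"
        by (intro mult_right_mono) (auto simp: M'_def)
      then show ?thesis using Bb[OF that] by linarith
    qed
    show "0 \<le> M'" by (simp add: M'_def)
  qed
  show ?thesis
  proof (intro conjI)
    show "\<forall>u0\<in>D. real_analytic_on (\<lambda>t. (norm (B (blinfun_apply (S t) u0)))\<^sup>2) {0<..}"
      using analytic by blast
    show "\<exists>K \<rho>. K \<ge> 1 \<and> 0 < \<rho> \<and> \<rho> < 1 \<and>
            (\<forall>u0\<in>D. \<forall>s t. 0 \<le> s \<longrightarrow> s < t \<longrightarrow> t - s \<le> 1 \<longrightarrow>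
               (\<forall>\<beta>::nat.
                  \<bar>(deriv ^^ \<beta>) (\<lambda>\<tau>. (norm (B (blinfun_apply (S \<tau>) u0)))\<^sup>2) t\<bar>
                    \<le> K * ((t - s) powr (-2) * fact \<beta> / (\<rho> * (t - s)) ^ \<beta>)
                        * (norm (blinfun_apply (S s) u0))\<^sup>2))"
    proof (rule exI[of _ "max 1 K0"], rule exI[of _ rho], intro conjI ballI allI impI)
      show "1 \<le> max 1 K0" by simp
      show "0 < rho" by (rule rho_pos)
      show "rho < 1" by (rule rho_lt1)
      fix u0 :: 'x and s t :: real and \<beta> :: nat assume u: "u0 \<in> D" and st: "0 \<le> s" "s < t" "t - s \<le> 1"
      have nn: "0 \<le> ((t - s) powr (-2) * fact \<beta> / (rho * (t - s)) ^ \<beta>) * (norm (blinfun_apply (S s) u0))\<^sup>2"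
        using rho_pos st by simp
      have "K0 * ((t - s) powr (-2) * fact \<beta> / (rho * (t - s)) ^ \<beta>) * (norm (blinfun_apply (S s) u0))\<^sup>2
          \<le> max 1 K0 * ((t - s) powr (-2) * fact \<beta> / (rho * (t - s)) ^ \<beta>) * (norm (blinfun_apply (S s) u0))\<^sup>2"
        using mult_right_mono[OF max.cobounded2[of K0 1] nn] by (simp add: mult.assoc)
      then show "\<bar>(deriv ^^ \<beta>) (\<lambda>\<tau>. (norm (B (blinfun_apply (S \<tau>) u0)))\<^sup>2) t\<bar>
          \<le> max 1 K0 * ((t - s) powr (-2) * fact \<beta> / (rho * (t - s)) ^ \<beta>) * (norm (blinfun_apply (S s) u0))\<^sup>2"
        using deriv_bound[OF st, of \<beta> u0] by linarith
    qed
  qed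
qed

end
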